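(* Let $(T_i,X_i,Y_i^1)$, $i=1,\dots,n$, be i.i.d. copies of $(T,X,Y^1)$, with $T\in\{0,1\}$ and $T$ conditionally independent of $Y^1$ given $X$; the observed outcome satisfies $Y_i=Y_i^1$ whenever $T_i=1$. Let $\pi^*(X)=P(T=1\mid X)$ and $\mu^1=E(Y^1)$. Suppose $E\{(Y^1)^2\mid X\}\le c$ and $\pi^*(X)\ge\delta$ almost surely for constants $c>0$ and $\delta\in(0,1)$. Then for any fixed $\gamma$, $$E\big[\{\hat\mu^1_{\mathrm{IPW}}(\gamma)-\mu^1\}^2\big]\le c\,\mathrm{MSRE}(\gamma)+\frac{2}{n\delta}\,c\,\{1+\mathrm{MSRE}(\gamma)\}.$$
   Context: $\pi(X;\gamma)=\{1+e^{-\gamma^\top f(X)}\}^{-1}$ with $f=(1,f_1,\dots,f_p)^\top$; $\hat\mu^1_{\mathrm{IPW}}(\gamma)=n^{-1}\sum_{i=1}^nT_iY_i/\pi(X_i;\gamma)$; $\mathrm{MSRE}(\gamma)=E[\{\pi^*(X)/\pi(X;\gamma)-1\}^2]$. *)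

theory Defs
  imports "HOL-Probability.Probability"
begin

definition sigmaX :: "'a measure \<Rightarrow> 'b measure \<Rightarrow> ('a \<Rightarrow> 'b) \<Rightarrow> 'a measure" where
  "sigmaX M N X = vimage_algebra (space M) X N"

text \<open>Logistic propensity score model pi(x;gamma) = 1/(1+exp(-gamma^T f(x))),
  with feature vector f = (f 0, f 1, ..., f p), where f 0 = 1 is the intercept.\<close>
definition logit_ps :: "nat \<Rightarrow> (nat \<Rightarrow> 'b \<Rightarrow> real) \<Rightarrow> (nat \<Rightarrow> real) \<Rightarrow> 'b \<Rightarrow> real" where
  "logit_ps p f \<gamma> x = 1 / (1 + exp (- (\<Sum>j\<le>p. \<gamma> j * f j x)))"

definition ipw_est :: "nat \<Rightarrow> (nat \<Rightarrow> 'b \<Rightarrow> real) \<Rightarrow> (nat \<Rightarrow> real) \<Rightarrow> nat \<Rightarrow>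
    (nat \<Rightarrow> 'a \<Rightarrow> real) \<Rightarrow> (nat \<Rightarrow> 'a \<Rightarrow> 'b) \<Rightarrow> (nat \<Rightarrow> 'a \<Rightarrow> real) \<Rightarrow> 'a \<Rightarrow> real" where
  "ipw_est p f \<gamma> n Tc Xc Yc \<omega> =
     (1 / real n) * (\<Sum>i<n. Tc i \<omega> * Yc i \<omega> / logit_ps p f \<gamma> (Xc i \<omega>))"

definition cond_indep_given :: "'a measure \<Rightarrow> 'b measure \<Rightarrow> ('a \<Rightarrow> 'b) \<Rightarrow> ('a \<Rightarrow> real) \<Rightarrow> ('a \<Rightarrow> real) \<Rightarrow> bool" where
  "cond_indep_given M N X T Y \<longleftrightarrow>
     (\<forall>A \<in> sets borel. \<forall>B \<in> sets borel. AE \<omega> in M.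
        real_cond_exp M (sigmaX M N X) (indicator {w \<in> space M. T w \<in> A \<and> Y w \<in> B}) \<omega>
        = real_cond_exp M (sigmaX M N X) (indicator {w \<in> space M. T w \<in> A}) \<omega>
          * real_cond_exp M (sigmaX M N X) (indicator {w \<in> space M. Y w \<in> B}) \<omega>)"

definition pistar :: "'a measure \<Rightarrow> 'b measure \<Rightarrow> ('a \<Rightarrow> 'b) \<Rightarrow> ('a \<Rightarrow> real) \<Rightarrow> 'a \<Rightarrow> real" where
  "pistar M N X T = real_cond_exp M (sigmaX M N X) (indicator {w \<in> space M. T w = 1})"

definition msre :: "'a measure \<Rightarrow> 'b measure \<Rightarrow> ('a \<Rightarrow> 'b) \<Rightarrow> ('a \<Rightarrow> real) \<Rightarrow> nat \<Rightarrow>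
    (nat \<Rightarrow> 'b \<Rightarrow> real) \<Rightarrow> (nat \<Rightarrow> real) \<Rightarrow> ennreal" where
  "msre M N X T p f \<gamma> =
     (\<integral>\<^sup>+ \<omega>. ennreal ((pistar M N X T \<omega> / logit_ps p f \<gamma> (X \<omega>) - 1)\<^sup>2) \<partial>M)"

end

theory Submission
  imports Defs
begin

lemma ennreal_mult_plus1: "0 \<le> (x::real) \<Longrightarrow> 0 \<le> a \<Longrightarrow> ennreal (x * (a + 1)) = ennreal x * (ennreal a + 1)"
  by (metis ennreal_1 ennreal_mult ennreal_plus zero_le_one add_nonneg_nonneg)

lemma int_prod_L2:
  fixes u v :: "'x \<Rightarrow> real"
  assumes [measurable]: "u \<in> borel_measurable M" "v \<in> borel_measurable M"
    and "integrable M (\<lambda>x. (u x)\<^sup>2)" "integrable M (\<lambda>x. (v x)\<^sup>2)"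
  shows "integrable M (\<lambda>x. u x * v x)"
proof (rule Bochner_Integration.integrable_bound[OF Bochner_Integration.integrable_add[OF assms(3,4)]])
  show "AE x in M. norm (u x * v x) \<le> norm ((u x)\<^sup>2 + (v x)\<^sup>2)"
  proof (rule AE_I2)
    fix x
    have "0 \<le> (\<bar>u x\<bar> - \<bar>v x\<bar>)\<^sup>2" by simp
    then have "2 * \<bar>u x\<bar> * \<bar>v x\<bar> \<le> (u x)\<^sup>2 + (v x)\<^sup>2"
      by (simp add: power2_eq_square algebra_simps)
    moreover have "0 \<le> \<bar>u x\<bar> * \<bar>v x\<bar>" by simp
    ultimately have "\<bar>u x * v x\<bar> \<le> (u x)\<^sup>2 + (v x)\<^sup>2" using abs_mult[of "u x" "v x"] by linarith
    then show "norm (u x * v x) \<le> norm ((u x)\<^sup>2 + (v x)\<^sup>2)"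
      by (simp add: abs_of_nonneg)
  qed
qed simp

locale P3 =
  fixes M :: "'a measure" and N :: "'b measure"
    and T Y1 :: "'a \<Rightarrow> real" and X :: "'a \<Rightarrow> 'b"
    and Tc Y1c Yc :: "nat \<Rightarrow> 'a \<Rightarrow> real" and Xc :: "nat \<Rightarrow> 'a \<Rightarrow> 'b"
    and n p :: nat and f :: "nat \<Rightarrow> 'b \<Rightarrow> real" and \<gamma> :: "nat \<Rightarrow> real"
    and c \<delta> :: real
  assumes prob: "prob_space M"
    and n_pos: "n \<ge> 1"
    and f_meas: "\<And>j. j \<le> p \<Longrightarrow> f j \<in> borel_measurable N"
    and T_meas: "T \<in> borel_measurable M" and X_meas: "X \<in> M \<rightarrow>\<^sub>M N"
    and Y1_meas: "Y1 \<in> borel_measurable M"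
    and T_bin: "\<forall>\<omega>\<in>space M. T \<omega> \<in> {0, 1}"
    and Tc_bin: "\<forall>i<n. \<forall>\<omega>\<in>space M. Tc i \<omega> \<in> {0, 1}"
    and iid_indep: "prob_space.indep_vars M (\<lambda>_. borel \<Otimes>\<^sub>M N \<Otimes>\<^sub>M borel)
                      (\<lambda>i \<omega>. (Tc i \<omega>, Xc i \<omega>, Y1c i \<omega>)) {..<n}"
    and iid_dist: "\<forall>i<n. distr M (borel \<Otimes>\<^sub>M N \<Otimes>\<^sub>M borel) (\<lambda>\<omega>. (Tc i \<omega>, Xc i \<omega>, Y1c i \<omega>))
                      = distr M (borel \<Otimes>\<^sub>M N \<Otimes>\<^sub>M borel) (\<lambda>\<omega>. (T \<omega>, X \<omega>, Y1 \<omega>))"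
    and Yc_meas: "\<forall>i<n. Yc i \<in> borel_measurable M"
    and consistency: "\<forall>i<n. \<forall>\<omega>\<in>space M. Tc i \<omega> = 1 \<longrightarrow> Yc i \<omega> = Y1c i \<omega>"
    and unconf: "cond_indep_given M N X T Y1"
    and Y1_sq_int: "integrable M (\<lambda>\<omega>. (Y1 \<omega>)\<^sup>2)"
    and c_pos: "c > 0" and \<delta>_pos: "0 < \<delta>" and \<delta>_lt1: "\<delta> < 1"
    and cond_mom: "AE \<omega> in M. real_cond_exp M (sigmaX M N X) (\<lambda>w. (Y1 w)\<^sup>2) \<omega> \<le> c"
    and overlap: "AE \<omega> in M. pistar M N X T \<omega> \<ge> \<delta>"
begin

abbreviation "G \<equiv> sigmaX M N X"
abbreviation "pp \<equiv> logit_ps p f \<gamma>"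

lemma pp_pos: "pp x > 0" unfolding logit_ps_def by (simp add: add_pos_pos)
lemma pp_le1: "pp x \<le> 1" unfolding logit_ps_def by (simp add: add_pos_pos)

lemma pp_meas[measurable]: "pp \<in> borel_measurable N"
  unfolding logit_ps_def[abs_def] using f_meas by measurable

lemma subalg: "subalgebra M G"
  unfolding subalgebra_def sigmaX_def
  using X_meas by (auto simp: sets_vimage_algebra2 measurable_space measurable_sets)

lemma fms: "finite_measure_subalgebra M G"
  unfolding finite_measure_subalgebra_def finite_measure_subalgebra_axioms_def
  using subalg prob by (simp add: prob_space.finite_measure)

lemma sfs: "sigma_finite_subalgebra M G"
  using fms finite_measure_subalgebra_is_sigma_finite by blast

lemma X_G[measurable]: "X \<in> G \<rightarrow>\<^sub>M N"
  unfolding sigmaX_def using X_meas by (intro measurable_vimage_algebra1) (auto simp: measurable_space)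

end

sublocale P3 \<subseteq> prob_space M by (rule prob)
sublocale P3 \<subseteq> S: sigma_finite_subalgebra M "sigmaX M N X" by (rule sfs)

context P3 begin

declare T_meas[measurable] Y1_meas[measurable] X_meas[measurable]

abbreviation "g1 \<equiv> indicator {w\<in>space M. T w = 1} :: 'a \<Rightarrow> real"
abbreviation "ps \<equiv> pistar M N X T"

lemma ps_G[measurable]: "ps \<in> borel_measurable G" unfolding pistar_def by simp
lemma ps_M[measurable]: "ps \<in> borel_measurable M" unfolding pistar_def by simp
lemma g1_M[measurable]: "g1 \<in> borel_measurable M" by measurable
lemma ps_int: "integrable M ps" unfolding pistar_def
  by (intro S.real_cond_exp_int(1) integrable_const_bound[where B=1]) auto

lemma rect:
  assumes A[measurable]: "A \<in> sets N" and B[measurable]: "B \<in> sets borel"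
  shows "(\<integral>\<omega>. g1 \<omega> * (indicator A (X \<omega>) * indicator B (Y1 \<omega>)) \<partial>M)
       = (\<integral>\<omega>. ps \<omega> * (indicator A (X \<omega>) * indicator B (Y1 \<omega>)) \<partial>M)"
proof -
  have [measurable]: "T \<in> borel_measurable M" "Y1 \<in> borel_measurable M" by (rule T_meas, rule Y1_meas)
  let ?I = "indicator {w \<in> space M. T w \<in> {1} \<and> Y1 w \<in> B} :: 'a \<Rightarrow> real"
  let ?J = "indicator {w \<in> space M. T w \<in> {1}} :: 'a \<Rightarrow> real"
  let ?K = "indicator {w \<in> space M. Y1 w \<in> B} :: 'a \<Rightarrow> real"
  let ?a = "\<lambda>\<omega>. indicator A (X \<omega>) :: real"
  have aG[measurable]: "?a \<in> borel_measurable G" by measurable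
  have aM[measurable]: "?a \<in> borel_measurable M" using X_meas by measurable
  have ci: "AE \<omega> in M. real_cond_exp M G ?I \<omega> = real_cond_exp M G ?J \<omega> * real_cond_exp M G ?K \<omega>"
    using unconf[unfolded cond_indep_given_def, rule_format, of "{1}" B] by simp
  have psJ: "ps = real_cond_exp M G ?J" unfolding pistar_def by simp
  have "(\<integral>\<omega>. g1 \<omega> * (?a \<omega> * indicator B (Y1 \<omega>)) \<partial>M) = (\<integral>\<omega>. ?a \<omega> * ?I \<omega> \<partial>M)"
    by (intro Bochner_Integration.integral_cong) (auto simp: indicator_def)
  also have "\<dots> = (\<integral>\<omega>. ?a \<omega> * real_cond_exp M G ?I \<omega> \<partial>M)"
    by (rule S.real_cond_exp_intg(2)[symmetric])
       (auto intro!: integrable_const_bound[where B=1] simp: indicator_def)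
  also have "\<dots> = (\<integral>\<omega>. (?a \<omega> * ps \<omega>) * real_cond_exp M G ?K \<omega> \<partial>M)"
    using ci by (intro integral_cong_AE) (auto simp: psJ)
  also have "\<dots> = (\<integral>\<omega>. (?a \<omega> * ps \<omega>) * ?K \<omega> \<partial>M)"
  proof (rule S.real_cond_exp_intg(2))
    show "integrable M (\<lambda>\<omega>. ?a \<omega> * ps \<omega> * ?K \<omega>)"
      by (rule Bochner_Integration.integrable_bound[OF ps_int]) (auto simp: indicator_def)
  qed auto
  also have "\<dots> = (\<integral>\<omega>. ps \<omega> * (?a \<omega> * indicator B (Y1 \<omega>)) \<partial>M)"
    by (intro Bochner_Integration.integral_cong) (auto simp: indicator_def)
  finally show ?thesis .
qed

lemma ps_nonneg: "AE \<omega> in M. 0 \<le> ps \<omega>"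
  using overlap by eventually_elim (use \<delta>_pos in auto)

definition "nu h = distr (density M (\<lambda>\<omega>. ennreal (h \<omega>))) (N \<Otimes>\<^sub>M borel) (\<lambda>\<omega>. (X \<omega>, Y1 \<omega>))"

lemma nu_rect:
  assumes h[measurable]: "h \<in> borel_measurable M" and hi: "integrable M h" and hn: "AE \<omega> in M. 0 \<le> h \<omega>"
    and A[measurable]: "A \<in> sets N" and B[measurable]: "B \<in> sets borel"
  shows "emeasure (nu h) (A \<times> B) = ennreal (\<integral>\<omega>. h \<omega> * (indicator A (X \<omega>) * indicator B (Y1 \<omega>)) \<partial>M)"
proof -
  have "emeasure (nu h) (A \<times> B) = emeasure (density M (\<lambda>\<omega>. ennreal (h \<omega>))) ((\<lambda>\<omega>. (X \<omega>, Y1 \<omega>)) -` (A \<times> B) \<inter> space M)"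
    unfolding nu_def by (subst emeasure_distr) auto
  also have "\<dots> = (\<integral>\<^sup>+\<omega>. ennreal (h \<omega>) * indicator ((\<lambda>\<omega>. (X \<omega>, Y1 \<omega>)) -` (A \<times> B) \<inter> space M) \<omega> \<partial>M)"
    by (rule emeasure_density) auto
  also have "\<dots> = (\<integral>\<^sup>+\<omega>. ennreal (h \<omega> * (indicator A (X \<omega>) * indicator B (Y1 \<omega>))) \<partial>M)"
    by (intro nn_integral_cong) (auto simp: indicator_def)
  also have "\<dots> = ennreal (\<integral>\<omega>. h \<omega> * (indicator A (X \<omega>) * indicator B (Y1 \<omega>)) \<partial>M)"
  proof (rule nn_integral_eq_integral)
    show "integrable M (\<lambda>\<omega>. h \<omega> * (indicator A (X \<omega>) * indicator B (Y1 \<omega>)))"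
      by (rule Bochner_Integration.integrable_bound[OF hi]) (auto simp: indicator_def)
    show "AE x in M. 0 \<le> h x * (indicator A (X x) * indicator B (Y1 x))"
      using hn by eventually_elim auto
  qed
  finally show ?thesis .
qed

lemma nu_eq: "nu g1 = nu ps"
proof (rule measure_eqI_generator_eq[where E="{a \<times> b | a b. a \<in> sets N \<and> b \<in> sets borel}"
      and \<Omega>="space N \<times> space borel" and A="\<lambda>_. space N \<times> space borel"])
  show "Int_stable {a \<times> b | a b. a \<in> sets N \<and> b \<in> sets (borel::real measure)}"
    by (rule Int_stable_pair_measure_generator)
  show "{a \<times> b | a b. a \<in> sets N \<and> b \<in> sets (borel::real measure)} \<subseteq> Pow (space N \<times> space borel)"
    using sets.space_closed[of N] by auto
  have g1i: "integrable M g1" by (intro integrable_const_bound[where B=1]) auto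
  show "emeasure (nu g1) Z = emeasure (nu ps) Z" if "Z \<in> {a \<times> b | a b. a \<in> sets N \<and> b \<in> sets borel}" for Z
    using that by (auto simp: nu_rect[OF _ g1i] nu_rect[OF _ ps_int ps_nonneg] rect)
  show "sets (nu g1) = sigma_sets (space N \<times> space borel) {a \<times> b | a b. a \<in> sets N \<and> b \<in> sets borel}"
    "sets (nu ps) = sigma_sets (space N \<times> space borel) {a \<times> b | a b. a \<in> sets N \<and> b \<in> sets borel}"
    by (simp_all add: nu_def sets_pair_measure)
  show "range (\<lambda>_. space N \<times> space borel) \<subseteq> {a \<times> b | a b. a \<in> sets N \<and> b \<in> sets (borel::real measure)}"
  proof -
    have "space N \<times> space borel \<in> {a \<times> b | a b. a \<in> sets N \<and> b \<in> sets (borel::real measure)}"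
      by (rule CollectI, rule exI[of _ "space N"], rule exI[of _ "space borel"]) auto
    then show ?thesis by auto
  qed
  show "(\<Union>i. space N \<times> space borel) = space N \<times> (space borel :: real set)" by simp
  show "emeasure (nu g1) (space N \<times> space borel) \<noteq> \<infinity>" for i :: nat
    by (subst nu_rect[OF _ g1i]) auto
qed

lemma nu_nn:
  assumes h[measurable]: "h \<in> borel_measurable M" and \<phi>[measurable]: "\<phi> \<in> borel_measurable (N \<Otimes>\<^sub>M borel)"
  shows "integral\<^sup>N (nu h) \<phi> = (\<integral>\<^sup>+\<omega>. ennreal (h \<omega>) * \<phi> (X \<omega>, Y1 \<omega>) \<partial>M)"
  unfolding nu_def by (subst nn_integral_distr) (auto simp: nn_integral_density)

lemma nu_int:
  assumes h[measurable]: "h \<in> borel_measurable M" and hn: "AE \<omega> in M. 0 \<le> h \<omega>"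
   and \<phi>[measurable]: "\<phi> \<in> borel_measurable (N \<Otimes>\<^sub>M borel)"
  shows "integral\<^sup>L (nu h) (\<phi>::_\<Rightarrow>real) = (\<integral>\<omega>. h \<omega> * \<phi> (X \<omega>, Y1 \<omega>) \<partial>M)"
  unfolding nu_def using hn by (subst integral_distr) (auto simp: integral_density)

lemma key_nn:
  assumes \<phi>[measurable]: "\<phi> \<in> borel_measurable (N \<Otimes>\<^sub>M borel)"
  shows "(\<integral>\<^sup>+\<omega>. ennreal (g1 \<omega>) * \<phi> (X \<omega>, Y1 \<omega>) \<partial>M) = (\<integral>\<^sup>+\<omega>. ennreal (ps \<omega>) * \<phi> (X \<omega>, Y1 \<omega>) \<partial>M)"
  using nu_nn[of g1 \<phi>] nu_nn[of ps \<phi>] nu_eq by simp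

lemma key_int:
  assumes \<phi>[measurable]: "\<phi> \<in> borel_measurable (N \<Otimes>\<^sub>M borel)"
  shows "(\<integral>\<omega>. g1 \<omega> * \<phi> (X \<omega>, Y1 \<omega>) \<partial>M) = (\<integral>\<omega>. ps \<omega> * (\<phi> (X \<omega>, Y1 \<omega>)::real) \<partial>M)"
  using nu_int[of g1 \<phi>] nu_int[OF ps_M ps_nonneg \<phi>] nu_eq by simp

lemma Y2_int: "integrable M (\<lambda>\<omega>. (Y1 \<omega>)\<^sup>2)" by (rule Y1_sq_int)

lemma nnce_le: "AE \<omega> in M. nn_cond_exp M G (\<lambda>w. ennreal ((Y1 w)\<^sup>2)) \<omega> \<le> ennreal c"
proof -
  have z: "(\<lambda>w. ennreal (- (Y1 w)\<^sup>2)) = (\<lambda>w. 0)" by (auto simp: ennreal_neg)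
  have "(\<integral>\<^sup>+ x. 1 * nn_cond_exp M G (\<lambda>w. 0) x \<partial>M) = (\<integral>\<^sup>+ x. 1 * 0 \<partial>M)"
    by (rule S.nn_cond_exp_intg) auto
  then have "AE x in M. nn_cond_exp M G (\<lambda>w. 0) x = 0"
    by (subst nn_integral_0_iff_AE[symmetric]) auto
  moreover
  have "(\<integral>\<^sup>+ x. 1 * nn_cond_exp M G (\<lambda>w. ennreal ((Y1 w)\<^sup>2)) x \<partial>M) = (\<integral>\<^sup>+ x. 1 * ennreal ((Y1 x)\<^sup>2) \<partial>M)"
    by (rule S.nn_cond_exp_intg) auto
  then have "(\<integral>\<^sup>+ x. nn_cond_exp M G (\<lambda>w. ennreal ((Y1 w)\<^sup>2)) x \<partial>M) \<noteq> \<infinity>"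
    using Y2_int by (simp add: nn_integral_eq_integral)
  then have "AE x in M. nn_cond_exp M G (\<lambda>w. ennreal ((Y1 w)\<^sup>2)) x \<noteq> \<infinity>"
    by (intro nn_integral_PInf_AE) auto
  ultimately show ?thesis using cond_mom
  proof eventually_elim
    case (elim x)
    then have "enn2real (nn_cond_exp M G (\<lambda>w. ennreal ((Y1 w)\<^sup>2)) x) \<le> c"
      unfolding real_cond_exp_def z by simp
    then have "ennreal (enn2real (nn_cond_exp M G (\<lambda>w. ennreal ((Y1 w)\<^sup>2)) x)) \<le> ennreal c"
      by (rule ennreal_leI)
    then show ?case using elim(2) by (simp add: ennreal_enn2real_if split: if_splits)
  qed
qed

lemma pw_bound:
  fixes q \<pi> :: real assumes "\<delta> \<le> q" "0 < \<pi>"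
  shows "q / \<pi>\<^sup>2 \<le> (2 * (q / \<pi> - 1)\<^sup>2 + 2) / \<delta>"
proof -
  have qp: "q > 0" using assms \<delta>_pos by auto
  have "q / \<pi>\<^sup>2 = (q/\<pi>)\<^sup>2 / q" using qp assms by (simp add: power2_eq_square field_simps)
  also have "\<dots> \<le> (q/\<pi>)\<^sup>2 / \<delta>" using assms \<delta>_pos by (intro divide_left_mono) auto
  also have "\<dots> \<le> (2 * (q / \<pi> - 1)\<^sup>2 + 2) / \<delta>"
  proof (intro divide_right_mono)
    show "(q/\<pi>)\<^sup>2 \<le> 2 * (q / \<pi> - 1)\<^sup>2 + 2"
    proof -
      have e: "2 * (q / \<pi> - 1)\<^sup>2 + 2 - (q/\<pi>)\<^sup>2 = (q/\<pi> - 2)\<^sup>2"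
        by (simp add: power2_eq_square algebra_simps)
      have "0 \<le> (q/\<pi> - 2)\<^sup>2" by simp
      then show ?thesis using e by linarith
    qed
  qed (use \<delta>_pos in auto)
  finally show ?thesis .
qed

abbreviation "msr \<equiv> msre M N X T p f \<gamma>"

lemma mom2: "(\<integral>\<^sup>+\<omega>. ennreal ((g1 \<omega> * Y1 \<omega> / pp (X \<omega>))\<^sup>2) \<partial>M) \<le> ennreal c * (ennreal (2/\<delta>) * (msr + 1))"
proof -
  have "(\<integral>\<^sup>+\<omega>. ennreal ((g1 \<omega> * Y1 \<omega> / pp (X \<omega>))\<^sup>2) \<partial>M)
      = (\<integral>\<^sup>+\<omega>. ennreal (g1 \<omega>) * ennreal ((Y1 \<omega>)\<^sup>2 / (pp (X \<omega>))\<^sup>2) \<partial>M)"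
    by (intro nn_integral_cong) (auto simp: indicator_def power_divide)
  also have "\<dots> = (\<integral>\<^sup>+\<omega>. ennreal (ps \<omega>) * ennreal ((Y1 \<omega>)\<^sup>2 / (pp (X \<omega>))\<^sup>2) \<partial>M)"
    by (rule key_nn[where \<phi>="\<lambda>(x,y). ennreal (y\<^sup>2 / (pp x)\<^sup>2)", simplified]) measurable
  also have "\<dots> = (\<integral>\<^sup>+\<omega>. ennreal (ps \<omega> / (pp (X \<omega>))\<^sup>2) * ennreal ((Y1 \<omega>)\<^sup>2) \<partial>M)"
    using ps_nonneg by (intro nn_integral_cong_AE) (auto elim!: eventually_mono simp: ennreal_mult[symmetric])
  also have "\<dots> = (\<integral>\<^sup>+\<omega>. ennreal (ps \<omega> / (pp (X \<omega>))\<^sup>2) * nn_cond_exp M G (\<lambda>w. ennreal ((Y1 w)\<^sup>2)) \<omega> \<partial>M)"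
    by (rule S.nn_cond_exp_intg[symmetric]) auto
  also have "\<dots> \<le> (\<integral>\<^sup>+\<omega>. ennreal (ps \<omega> / (pp (X \<omega>))\<^sup>2) * ennreal c \<partial>M)"
    using nnce_le by (intro nn_integral_mono_AE) (auto elim!: eventually_mono intro: mult_left_mono)
  also have "\<dots> \<le> (\<integral>\<^sup>+\<omega>. ennreal c * (ennreal (2/\<delta>) * (ennreal ((ps \<omega> / pp (X \<omega>) - 1)\<^sup>2) + 1)) \<partial>M)"
  proof (intro nn_integral_mono_AE, use overlap in eventually_elim)
    case (elim \<omega>)
    have "ennreal (ps \<omega> / (pp (X \<omega>))\<^sup>2) \<le> ennreal ((2 * (ps \<omega> / pp (X \<omega>) - 1)\<^sup>2 + 2) / \<delta>)"
      using pw_bound[OF elim pp_pos] by (rule ennreal_leI)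
    also have "\<dots> = ennreal ((2/\<delta>) * ((ps \<omega> / pp (X \<omega>) - 1)\<^sup>2 + 1))"
      using \<delta>_pos by (intro arg_cong[where f=ennreal]) (simp add: field_simps)
    also have "\<dots> = ennreal (2/\<delta>) * (ennreal ((ps \<omega> / pp (X \<omega>) - 1)\<^sup>2) + 1)"
      using \<delta>_pos by (intro ennreal_mult_plus1) auto
    finally show ?case by (metis mult.commute mult_right_mono zero_le)
  qed
  also have "\<dots> = ennreal c * (ennreal (2/\<delta>) * (msr + 1))"
    unfolding msre_def
    by (simp add: nn_integral_cmult nn_integral_add emeasure_space_1)
  finally show ?thesis .
qed

lemma L2_L1:
  fixes u :: "'a \<Rightarrow> real"
  assumes [measurable]: "u \<in> borel_measurable M" and "integrable M (\<lambda>x. (u x)\<^sup>2)"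
  shows "integrable M u"
proof (rule Bochner_Integration.integrable_bound[OF Bochner_Integration.integrable_add[OF integrable_const[of 1] assms(2)]])
  show "AE x in M. norm (u x) \<le> norm (1 + (u x)\<^sup>2)"
  proof (rule AE_I2)
    fix x
    have "0 \<le> (\<bar>u x\<bar> - 1)\<^sup>2" by simp
    then have "\<bar>u x\<bar> \<le> 1 + (u x)\<^sup>2" by (simp add: power2_eq_square algebra_simps)
    then show "norm (u x) \<le> norm (1 + (u x)\<^sup>2)" by simp
  qed
qed simp

abbreviation "rr \<equiv> \<lambda>\<omega>. ps \<omega> / pp (X \<omega>) - 1"

lemma rr_M[measurable]: "rr \<in> borel_measurable M" by measurable

lemma msr_eq: "msr = (\<integral>\<^sup>+\<omega>. ennreal ((rr \<omega>)\<^sup>2) \<partial>M)" unfolding msre_def ..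

lemma rr_L2: assumes "msr \<noteq> \<infinity>" shows "integrable M (\<lambda>\<omega>. (rr \<omega>)\<^sup>2)"
  by (rule integrableI_bounded) (use assms in \<open>auto simp: msr_eq top.not_eq_extremum\<close>)

lemma Y_int: "integrable M Y1" by (rule L2_L1[OF Y1_meas Y1_sq_int])

lemma EY2: "(\<integral>\<omega>. (Y1 \<omega>)\<^sup>2 \<partial>M) \<le> c"
proof -
  have "(\<integral>\<omega>. (Y1 \<omega>)\<^sup>2 \<partial>M) = (\<integral>\<omega>. real_cond_exp M G (\<lambda>w. (Y1 w)\<^sup>2) \<omega> \<partial>M)"
    by (rule S.real_cond_exp_int(2)[OF Y1_sq_int, symmetric])
  also have "\<dots> \<le> (\<integral>\<omega>. c \<partial>M)"
    by (rule integral_mono_AE[OF S.real_cond_exp_int(1)[OF Y1_sq_int] _ cond_mom]) simp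
  also have "\<dots> = c" by (simp add: prob_space)
  finally show ?thesis .
qed

abbreviation "Z \<equiv> \<lambda>\<omega>. g1 \<omega> * Y1 \<omega> / pp (X \<omega>)"

lemma Z_M[measurable]: "Z \<in> borel_measurable M" by measurable

lemma bias:
  assumes fin: "msr \<noteq> \<infinity>"
  shows "ennreal (((\<integral>\<omega>. Z \<omega> \<partial>M) - expectation Y1)\<^sup>2) \<le> ennreal c * msr"
proof -
  have rY: "integrable M (\<lambda>\<omega>. rr \<omega> * Y1 \<omega>)"
    by (rule int_prod_L2[OF rr_M Y1_meas rr_L2[OF fin] Y1_sq_int])
  have "(\<integral>\<omega>. Z \<omega> \<partial>M) = (\<integral>\<omega>. g1 \<omega> * (Y1 \<omega> / pp (X \<omega>)) \<partial>M)" by simp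
  also have "\<dots> = (\<integral>\<omega>. ps \<omega> * (Y1 \<omega> / pp (X \<omega>)) \<partial>M)"
  proof -
    have m: "(\<lambda>(x,y). y / pp x) \<in> borel_measurable (N \<Otimes>\<^sub>M borel)" by measurable
    show ?thesis using key_int[OF m] by simp
  qed
  also have "\<dots> = (\<integral>\<omega>. rr \<omega> * Y1 \<omega> + Y1 \<omega> \<partial>M)"
    by (intro Bochner_Integration.integral_cong) (auto simp: field_simps pp_pos[THEN less_imp_neq, symmetric])
  also have "\<dots> = (\<integral>\<omega>. rr \<omega> * Y1 \<omega> \<partial>M) + expectation Y1"
    by (rule Bochner_Integration.integral_add[OF rY Y_int])
  finally have b: "(\<integral>\<omega>. Z \<omega> \<partial>M) - expectation Y1 = (\<integral>\<omega>. rr \<omega> * Y1 \<omega> \<partial>M)" by simp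
  have "\<bar>\<integral>\<omega>. rr \<omega> * Y1 \<omega> \<partial>M\<bar> \<le> (\<integral>\<omega>. \<bar>rr \<omega>\<bar> * \<bar>Y1 \<omega>\<bar> \<partial>M)"
    using integral_abs_bound[of M "\<lambda>\<omega>. rr \<omega> * Y1 \<omega>"] by (simp add: abs_mult)
  then have "ennreal (\<bar>\<integral>\<omega>. rr \<omega> * Y1 \<omega> \<partial>M\<bar>) \<le> ennreal (\<integral>\<omega>. \<bar>rr \<omega>\<bar> * \<bar>Y1 \<omega>\<bar> \<partial>M)"
    by (rule ennreal_leI)
  also have "\<dots> = (\<integral>\<^sup>+\<omega>. ennreal \<bar>rr \<omega>\<bar> * ennreal \<bar>Y1 \<omega>\<bar> \<partial>M)"
    using integrable_abs[OF rY] by (subst nn_integral_eq_integral[symmetric]) (auto simp: ennreal_mult abs_mult intro!: nn_integral_cong)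
  finally have h1: "ennreal (\<bar>\<integral>\<omega>. rr \<omega> * Y1 \<omega> \<partial>M\<bar>) \<le> (\<integral>\<^sup>+\<omega>. ennreal \<bar>rr \<omega>\<bar> * ennreal \<bar>Y1 \<omega>\<bar> \<partial>M)" .
  have "ennreal (((\<integral>\<omega>. Z \<omega> \<partial>M) - expectation Y1)\<^sup>2) = (ennreal (\<bar>\<integral>\<omega>. rr \<omega> * Y1 \<omega> \<partial>M\<bar>))\<^sup>2"
    unfolding b by (simp only: ennreal_power[OF abs_ge_zero] power2_abs)
  also have "\<dots> \<le> (\<integral>\<^sup>+\<omega>. ennreal \<bar>rr \<omega>\<bar> * ennreal \<bar>Y1 \<omega>\<bar> \<partial>M)\<^sup>2"
    using h1 by (simp add: power_mono)
  also have "\<dots> \<le> (\<integral>\<^sup>+\<omega>. (ennreal \<bar>rr \<omega>\<bar>)\<^sup>2 \<partial>M) * (\<integral>\<^sup>+\<omega>. (ennreal \<bar>Y1 \<omega>\<bar>)\<^sup>2 \<partial>M)"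
    by (rule Cauchy_Schwarz_nn_integral) auto
  also have "(\<integral>\<^sup>+\<omega>. (ennreal \<bar>rr \<omega>\<bar>)\<^sup>2 \<partial>M) = msr"
    unfolding msr_eq by (intro nn_integral_cong) (simp add: ennreal_power)
  also have "(\<integral>\<^sup>+\<omega>. (ennreal \<bar>Y1 \<omega>\<bar>)\<^sup>2 \<partial>M) = ennreal (\<integral>\<omega>. (Y1 \<omega>)\<^sup>2 \<partial>M)"
    using Y1_sq_int by (subst nn_integral_eq_integral[symmetric]) (auto simp: ennreal_power intro!: nn_integral_cong)
  also have "msr * ennreal (\<integral>\<omega>. (Y1 \<omega>)\<^sup>2 \<partial>M) \<le> msr * ennreal c"
    using EY2 by (intro mult_left_mono ennreal_leI) auto
  finally show ?thesis by (simp add: mult.commute)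
qed

abbreviation "TXY \<equiv> borel \<Otimes>\<^sub>M N \<Otimes>\<^sub>M (borel :: real measure)"
abbreviation "tup i \<equiv> \<lambda>\<omega>. (Tc i \<omega>, Xc i \<omega>, Y1c i \<omega>)"
abbreviation "tup0 \<equiv> \<lambda>\<omega>. (T \<omega>, X \<omega>, Y1 \<omega>)"
definition "psi = (\<lambda>(t::real, x, y::real). t * y / pp x)"

lemma psi_M[measurable]: "psi \<in> borel_measurable TXY" unfolding psi_def by measurable

lemma tup_M: "i < n \<Longrightarrow> tup i \<in> M \<rightarrow>\<^sub>M TXY"
  using iid_indep unfolding indep_vars_def by auto

lemma tup0_M[measurable]: "tup0 \<in> M \<rightarrow>\<^sub>M TXY" by measurable

lemma transfer_int:
  assumes i: "i < n" and h[measurable]: "h \<in> borel_measurable TXY"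
  shows "(\<integral>\<omega>. h (tup i \<omega>) \<partial>M) = (\<integral>\<omega>. (h (tup0 \<omega>) :: real) \<partial>M)"
    "integrable M (\<lambda>\<omega>. h (tup i \<omega>)) = integrable M (\<lambda>\<omega>. h (tup0 \<omega>))"
proof -
  have e: "distr M TXY (tup i) = distr M TXY tup0" using iid_dist i by auto
  show "(\<integral>\<omega>. h (tup i \<omega>) \<partial>M) = (\<integral>\<omega>. h (tup0 \<omega>) \<partial>M)"
    using integral_distr[OF tup_M[OF i] h] integral_distr[OF tup0_M h] e by simp
  show "integrable M (\<lambda>\<omega>. h (tup i \<omega>)) = integrable M (\<lambda>\<omega>. h (tup0 \<omega>))"
    using integrable_distr_eq[OF tup_M[OF i] h] integrable_distr_eq[OF tup0_M h] e by simp
qed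

lemma Z_psi: "\<omega> \<in> space M \<Longrightarrow> Z \<omega> = psi (tup0 \<omega>)"
  using T_bin unfolding psi_def by (auto simp: indicator_def)

lemma Zi_psi: "i < n \<Longrightarrow> \<omega> \<in> space M \<Longrightarrow> Tc i \<omega> * Yc i \<omega> / pp (Xc i \<omega>) = psi (tup i \<omega>)"
  using Tc_bin consistency unfolding psi_def by fastforce

lemma Z2_fin: assumes "msr \<noteq> \<infinity>" shows "(\<integral>\<^sup>+\<omega>. ennreal ((Z \<omega>)\<^sup>2) \<partial>M) < \<infinity>"
proof -
  have "ennreal c * (ennreal (2/\<delta>) * (msr + 1)) < \<infinity>"
    using assms by (simp add: ennreal_mult_less_top top.not_eq_extremum)
  then show ?thesis using mom2 by (simp add: power_divide le_less_trans)
qed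

lemma Z2_int: assumes "msr \<noteq> \<infinity>" shows "integrable M (\<lambda>\<omega>. (Z \<omega>)\<^sup>2)"
  by (rule integrableI_bounded) (use Z2_fin[OF assms] in auto)

lemma final:
  assumes fin: "msr \<noteq> \<infinity>"
  shows "(\<integral>\<^sup>+ \<omega>. ennreal ((ipw_est p f \<gamma> n Tc Xc Yc \<omega> - expectation Y1)\<^sup>2) \<partial>M)
    \<le> ennreal (((\<integral>\<omega>. Z \<omega> \<partial>M) - expectation Y1)\<^sup>2 + (\<integral>\<omega>. (Z \<omega>)\<^sup>2 \<partial>M) / real n)"
proof -
  define EZ where "EZ = (\<integral>\<omega>. Z \<omega> \<partial>M)"
  define a where "a = EZ - expectation Y1"
  define W where "W = (\<lambda>i \<omega>. psi (tup i \<omega>) - EZ)"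
  define S where "S = (\<lambda>\<omega>. \<Sum>i<n. W i \<omega>)"
  have Z2i: "integrable M (\<lambda>\<omega>. (Z \<omega>)\<^sup>2)" by (rule Z2_int[OF fin])
  have Zi: "integrable M Z" by (rule L2_L1[OF Z_M Z2i])
  have psi0: "integrable M (\<lambda>\<omega>. psi (tup0 \<omega>))"
    using Zi Bochner_Integration.integrable_cong[OF refl, of M "\<lambda>\<omega>. psi (tup0 \<omega>)" Z] by (simp add: Z_psi)
  have psi02: "integrable M (\<lambda>\<omega>. (psi (tup0 \<omega>))\<^sup>2)"
    using Z2i Bochner_Integration.integrable_cong[OF refl, of M "\<lambda>\<omega>. (psi (tup0 \<omega>))\<^sup>2" "\<lambda>\<omega>. (Z \<omega>)\<^sup>2"] by (simp add: Z_psi)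
  have Epsi0: "(\<integral>\<omega>. psi (tup0 \<omega>) \<partial>M) = EZ"
    unfolding EZ_def by (intro Bochner_Integration.integral_cong) (simp_all add: Z_psi)
  have Epsi02: "(\<integral>\<omega>. (psi (tup0 \<omega>))\<^sup>2 \<partial>M) = (\<integral>\<omega>. (Z \<omega>)\<^sup>2 \<partial>M)"
    by (intro Bochner_Integration.integral_cong) (simp_all add: Z_psi)
  have m2: "(\<lambda>v. (psi v)\<^sup>2) \<in> borel_measurable TXY" by measurable
  have WM[measurable]: "i < n \<Longrightarrow> W i \<in> borel_measurable M" for i
    unfolding W_def using tup_M[of i] by measurable
  have Pi: "i < n \<Longrightarrow> integrable M (\<lambda>\<omega>. psi (tup i \<omega>))" for i
    using transfer_int(2)[OF _ psi_M] psi0 by simp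
  have Pi2: "i < n \<Longrightarrow> integrable M (\<lambda>\<omega>. (psi (tup i \<omega>))\<^sup>2)" for i
    using transfer_int(2)[OF _ m2] psi02 by simp
  have EPi: "i < n \<Longrightarrow> (\<integral>\<omega>. psi (tup i \<omega>) \<partial>M) = EZ" for i
    using transfer_int(1)[OF _ psi_M] Epsi0 by simp
  have EPi2: "i < n \<Longrightarrow> (\<integral>\<omega>. (psi (tup i \<omega>))\<^sup>2 \<partial>M) = (\<integral>\<omega>. (Z \<omega>)\<^sup>2 \<partial>M)" for i
    using transfer_int(1)[OF _ m2] Epsi02 by simp
  have Wi: "i < n \<Longrightarrow> integrable M (W i)" for i
    unfolding W_def using Pi[of i] by simp
  have EW: "i < n \<Longrightarrow> (\<integral>\<omega>. W i \<omega> \<partial>M) = 0" for i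
    unfolding W_def using Pi[of i] EPi[of i] by (simp add: prob_space)
  have W2: "i < n \<Longrightarrow> (\<lambda>\<omega>. (W i \<omega>)\<^sup>2) = (\<lambda>\<omega>. (psi (tup i \<omega>))\<^sup>2 - 2 * EZ * psi (tup i \<omega>) + EZ\<^sup>2)" for i
    unfolding W_def by (auto simp: power2_eq_square algebra_simps)
  have W2i: "i < n \<Longrightarrow> integrable M (\<lambda>\<omega>. (W i \<omega>)\<^sup>2)" for i
    using Pi[of i] Pi2[of i] by (simp add: W2)
  have EW2: "i < n \<Longrightarrow> (\<integral>\<omega>. (W i \<omega>)\<^sup>2 \<partial>M) \<le> (\<integral>\<omega>. (Z \<omega>)\<^sup>2 \<partial>M)" for i
  proof -
    assume i: "i < n"
    have "(\<integral>\<omega>. (W i \<omega>)\<^sup>2 \<partial>M) = (\<integral>\<omega>. (psi (tup i \<omega>))\<^sup>2 - 2 * EZ * psi (tup i \<omega>) + EZ\<^sup>2 \<partial>M)"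
      by (simp only: W2[OF i])
    also have "\<dots> = (\<integral>\<omega>. (psi (tup i \<omega>))\<^sup>2 \<partial>M) - 2 * EZ * (\<integral>\<omega>. psi (tup i \<omega>) \<partial>M) + EZ\<^sup>2"
      using Pi[OF i] Pi2[OF i] by (simp add: prob_space)
    also have "\<dots> = (\<integral>\<omega>. (Z \<omega>)\<^sup>2 \<partial>M) - EZ\<^sup>2"
      using EPi[OF i] EPi2[OF i] by (simp add: power2_eq_square)
    finally show ?thesis by simp
  qed
  have WWi: "i < n \<Longrightarrow> j < n \<Longrightarrow> integrable M (\<lambda>\<omega>. W i \<omega> * W j \<omega>)" for i j
    by (rule int_prod_L2) (auto intro: W2i)
  have indW: "indep_vars (\<lambda>_. borel) W {..<n}"
    unfolding W_def by (rule indep_vars_compose2[OF iid_indep]) measurable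
  have EWW: "i < n \<Longrightarrow> j < n \<Longrightarrow> i \<noteq> j \<Longrightarrow> (\<integral>\<omega>. W i \<omega> * W j \<omega> \<partial>M) = 0" for i j
  proof -
    assume ij: "i < n" "j < n" "i \<noteq> j"
    have "indep_vars (\<lambda>_. borel) W {i, j}" by (rule indep_vars_subset[OF indW]) (use ij in auto)
    then have "(\<integral>\<omega>. (\<Prod>k\<in>{i,j}. W k \<omega>) \<partial>M) = (\<Prod>k\<in>{i,j}. \<integral>\<omega>. W k \<omega> \<partial>M)"
      using ij by (intro indep_vars_lebesgue_integral) (auto intro: Wi)
    then show ?thesis using ij EW by simp
  qed
  have ES2: "(\<integral>\<omega>. (S \<omega>)\<^sup>2 \<partial>M) \<le> real n * (\<integral>\<omega>. (Z \<omega>)\<^sup>2 \<partial>M)"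
  proof -
    have "(\<integral>\<omega>. (S \<omega>)\<^sup>2 \<partial>M) = (\<integral>\<omega>. (\<Sum>i<n. \<Sum>j<n. W i \<omega> * W j \<omega>) \<partial>M)"
      unfolding S_def by (simp add: power2_eq_square sum_product)
    also have "\<dots> = (\<Sum>i<n. (\<integral>\<omega>. (\<Sum>j<n. W i \<omega> * W j \<omega>) \<partial>M))"
      by (rule Bochner_Integration.integral_sum) (auto intro!: Bochner_Integration.integrable_sum WWi)
    also have "\<dots> = (\<Sum>i<n. \<Sum>j<n. (\<integral>\<omega>. W i \<omega> * W j \<omega> \<partial>M))"
      by (intro sum.cong refl Bochner_Integration.integral_sum) (auto intro: WWi)
    also have "\<dots> = (\<Sum>i<n. (\<integral>\<omega>. (W i \<omega>)\<^sup>2 \<partial>M))"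
    proof (rule sum.cong[OF refl])
      fix i assume i: "i \<in> {..<n}"
      have "(\<Sum>j<n. (\<integral>\<omega>. W i \<omega> * W j \<omega> \<partial>M)) = (\<Sum>j<n. if j = i then (\<integral>\<omega>. (W i \<omega>)\<^sup>2 \<partial>M) else 0)"
        using i EWW by (intro sum.cong) (auto simp: power2_eq_square)
      also have "\<dots> = (\<integral>\<omega>. (W i \<omega>)\<^sup>2 \<partial>M)" using i by simp
      finally show "(\<Sum>j<n. (\<integral>\<omega>. W i \<omega> * W j \<omega> \<partial>M)) = (\<integral>\<omega>. (W i \<omega>)\<^sup>2 \<partial>M)" .
    qed
    also have "\<dots> \<le> (\<Sum>i<n. (\<integral>\<omega>. (Z \<omega>)\<^sup>2 \<partial>M))"
      using EW2 by (intro sum_mono) auto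
    finally show ?thesis by simp
  qed
  have Si: "integrable M S" unfolding S_def by (auto intro!: Bochner_Integration.integrable_sum Wi)
  have S2i: "integrable M (\<lambda>\<omega>. (S \<omega>)\<^sup>2)"
    unfolding S_def power2_eq_square sum_product
    by (auto intro!: Bochner_Integration.integrable_sum WWi)
  have ES: "(\<integral>\<omega>. S \<omega> \<partial>M) = 0"
    unfolding S_def using Wi EW by (simp add: Bochner_Integration.integral_sum)
  have ipw: "ipw_est p f \<gamma> n Tc Xc Yc \<omega> - expectation Y1 = S \<omega> / real n + a" if w: "\<omega> \<in> space M" for \<omega>
  proof -
    have "ipw_est p f \<gamma> n Tc Xc Yc \<omega> = (1 / real n) * (\<Sum>i<n. W i \<omega> + EZ)"
    proof -
      have "(\<Sum>i<n. Tc i \<omega> * Yc i \<omega> / pp (Xc i \<omega>)) = (\<Sum>i<n. W i \<omega> + EZ)"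
        unfolding W_def using w Zi_psi by (intro sum.cong) auto
      then show ?thesis unfolding ipw_est_def by simp
    qed
    also have "\<dots> = S \<omega> / real n + EZ" using n_pos by (simp add: S_def sum.distrib field_simps)
    finally show ?thesis unfolding a_def by simp
  qed
  have sq: "(S \<omega> / real n + a)\<^sup>2 = (1 / (real n)\<^sup>2) * (S \<omega>)\<^sup>2 + (2 * a / real n) * S \<omega> + a\<^sup>2" for \<omega>
    using n_pos by (simp add: power2_eq_square field_simps)
  have "(\<integral>\<^sup>+ \<omega>. ennreal ((ipw_est p f \<gamma> n Tc Xc Yc \<omega> - expectation Y1)\<^sup>2) \<partial>M)
      = (\<integral>\<^sup>+ \<omega>. ennreal ((1 / (real n)\<^sup>2) * (S \<omega>)\<^sup>2 + (2 * a / real n) * S \<omega> + a\<^sup>2) \<partial>M)"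
    by (intro nn_integral_cong) (simp add: ipw sq)
  also have "\<dots> = ennreal (\<integral>\<omega>. (1 / (real n)\<^sup>2) * (S \<omega>)\<^sup>2 + (2 * a / real n) * S \<omega> + a\<^sup>2 \<partial>M)"
  proof (rule nn_integral_eq_integral)
    show "integrable M (\<lambda>\<omega>. (1 / (real n)\<^sup>2) * (S \<omega>)\<^sup>2 + (2 * a / real n) * S \<omega> + a\<^sup>2)"
      using Si S2i by simp
    show "AE \<omega> in M. 0 \<le> (1 / (real n)\<^sup>2) * (S \<omega>)\<^sup>2 + (2 * a / real n) * S \<omega> + a\<^sup>2"
      by (intro AE_I2) (simp only: sq[symmetric] zero_le_power2)
  qed
  also have "(\<integral>\<omega>. (1 / (real n)\<^sup>2) * (S \<omega>)\<^sup>2 + (2 * a / real n) * S \<omega> + a\<^sup>2 \<partial>M)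
      = (1 / (real n)\<^sup>2) * (\<integral>\<omega>. (S \<omega>)\<^sup>2 \<partial>M) + a\<^sup>2"
    using Si S2i ES by (simp add: prob_space)
  also have "\<dots> \<le> a\<^sup>2 + (\<integral>\<omega>. (Z \<omega>)\<^sup>2 \<partial>M) / real n"
  proof -
    have "(1 / (real n)\<^sup>2) * (\<integral>\<omega>. (S \<omega>)\<^sup>2 \<partial>M) \<le> (1 / (real n)\<^sup>2) * (real n * (\<integral>\<omega>. (Z \<omega>)\<^sup>2 \<partial>M))"
      using ES2 by (intro mult_left_mono) auto
    also have "\<dots> = (\<integral>\<omega>. (Z \<omega>)\<^sup>2 \<partial>M) / real n" using n_pos by (simp add: power2_eq_square)
    finally show ?thesis by simp
  qed
  finally show ?thesis unfolding a_def EZ_def by (simp add: ennreal_leI)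
qed

lemma main:
  "(\<integral>\<^sup>+ \<omega>. ennreal ((ipw_est p f \<gamma> n Tc Xc Yc \<omega> - prob_space.expectation M Y1)\<^sup>2) \<partial>M)
           \<le> ennreal c * msre M N X T p f \<gamma>
             + ennreal (2 / (real n * \<delta>)) * ennreal c * (1 + msre M N X T p f \<gamma>)"
proof (cases "msr = \<infinity>")
  case True
  then show ?thesis using c_pos by (simp add: ennreal_mult_top)
next
  case False
  define m where "m = enn2real msr"
  have msr_m: "msr = ennreal m" unfolding m_def using False by (simp add: ennreal_enn2real_if top.not_eq_extremum)
  have m0: "0 \<le> m" unfolding m_def by simp
  define EZ2 where "EZ2 = (\<integral>\<omega>. (Z \<omega>)\<^sup>2 \<partial>M)"
  define a where "a = (\<integral>\<omega>. Z \<omega> \<partial>M) - expectation Y1"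
  have "ennreal (a\<^sup>2) \<le> ennreal (c * m)"
    using bias[OF False] unfolding a_def msr_m using c_pos m0 by (simp add: ennreal_mult)
  then have ha: "a\<^sup>2 \<le> c * m" using c_pos m0 by (simp add: ennreal_le_iff)
  have "ennreal EZ2 = (\<integral>\<^sup>+\<omega>. ennreal ((Z \<omega>)\<^sup>2) \<partial>M)"
    unfolding EZ2_def using Z2_int[OF False] by (simp add: nn_integral_eq_integral)
  also have "\<dots> \<le> ennreal c * (ennreal (2/\<delta>) * (msr + 1))" using mom2 by (simp add: power_divide)
  also have "\<dots> = ennreal c * ennreal ((2/\<delta>) * (m + 1))"
    unfolding msr_m using \<delta>_pos m0 by (subst ennreal_mult_plus1) auto
  also have "\<dots> = ennreal (c * ((2/\<delta>) * (m + 1)))"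
    using c_pos \<delta>_pos m0 by (intro ennreal_mult[symmetric]) auto
  finally have hz: "EZ2 \<le> c * ((2/\<delta>) * (m + 1))"
    using c_pos \<delta>_pos m0 ennreal_le_iff[of "c * ((2/\<delta>) * (m + 1))" EZ2] by simp
  have "(\<integral>\<^sup>+ \<omega>. ennreal ((ipw_est p f \<gamma> n Tc Xc Yc \<omega> - expectation Y1)\<^sup>2) \<partial>M) \<le> ennreal (a\<^sup>2 + EZ2 / real n)"
    using final[OF False] unfolding a_def EZ2_def .
  also have "\<dots> \<le> ennreal (c * m + 2 / (real n * \<delta>) * c * (1 + m))"
  proof (rule ennreal_leI)
    have "EZ2 / real n \<le> (c * ((2/\<delta>) * (m + 1))) / real n"
      using hz n_pos by (intro divide_right_mono) auto
    also have "\<dots> = 2 / (real n * \<delta>) * c * (1 + m)" by (simp add: field_simps)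
    finally show "a\<^sup>2 + EZ2 / real n \<le> c * m + 2 / (real n * \<delta>) * c * (1 + m)" using ha by linarith
  qed
  also have "\<dots> = ennreal c * msr + ennreal (2 / (real n * \<delta>)) * ennreal c * (1 + msr)"
  proof -
    have e1: "ennreal (c*m) = ennreal c * ennreal m" using c_pos m0 by (simp add: ennreal_mult)
    have e2: "ennreal (2 / (real n * \<delta>) * c * (1 + m)) = ennreal (2 / (real n * \<delta>)) * ennreal c * (1 + ennreal m)"
    proof -
      have x0: "0 \<le> 2 / (real n * \<delta>)" using \<delta>_pos by simp
      have "ennreal (2 / (real n * \<delta>) * c * (1 + m)) = ennreal (2 / (real n * \<delta>) * c) * ennreal (1 + m)"
        by (rule ennreal_mult) (use x0 c_pos m0 in auto)
      also have "ennreal (2 / (real n * \<delta>) * c) = ennreal (2 / (real n * \<delta>)) * ennreal c"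
        by (rule ennreal_mult) (use x0 c_pos in auto)
      also have "ennreal (1 + m) = 1 + ennreal m" using m0 by (simp add: ennreal_plus)
      finally show ?thesis .
    qed
    have "ennreal (c * m + 2 / (real n * \<delta>) * c * (1 + m)) = ennreal (c*m) + ennreal (2 / (real n * \<delta>) * c * (1 + m))"
      using c_pos m0 \<delta>_pos by (intro ennreal_plus) auto
    then show ?thesis unfolding msr_m e1 e2 .
  qed
  finally show ?thesis .
qed

end

theorem proposition3:
  fixes M :: "'a measure" and N :: "'b measure"
    and T Y1 :: "'a \<Rightarrow> real" and X :: "'a \<Rightarrow> 'b"
    and Tc Y1c Yc :: "nat \<Rightarrow> 'a \<Rightarrow> real" and Xc :: "nat \<Rightarrow> 'a \<Rightarrow> 'b"
    and n p :: nat and f :: "nat \<Rightarrow> 'b \<Rightarrow> real" and \<gamma> :: "nat \<Rightarrow> real"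
    and c \<delta> :: real
  assumes prob: "prob_space M"
    and n_pos: "n \<ge> 1"
    and f0: "\<And>x. f 0 x = 1"
    and f_meas: "\<And>j. j \<le> p \<Longrightarrow> f j \<in> borel_measurable N"
    and T_meas: "T \<in> borel_measurable M" and X_meas: "X \<in> M \<rightarrow>\<^sub>M N"
    and Y1_meas: "Y1 \<in> borel_measurable M"
    and T_bin: "\<forall>\<omega>\<in>space M. T \<omega> \<in> {0, 1}"
    and Tc_bin: "\<forall>i<n. \<forall>\<omega>\<in>space M. Tc i \<omega> \<in> {0, 1}"
    and iid_indep: "prob_space.indep_vars M (\<lambda>_. borel \<Otimes>\<^sub>M N \<Otimes>\<^sub>M borel)
                      (\<lambda>i \<omega>. (Tc i \<omega>, Xc i \<omega>, Y1c i \<omega>)) {..<n}"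
    and iid_dist: "\<forall>i<n. distr M (borel \<Otimes>\<^sub>M N \<Otimes>\<^sub>M borel) (\<lambda>\<omega>. (Tc i \<omega>, Xc i \<omega>, Y1c i \<omega>))
                      = distr M (borel \<Otimes>\<^sub>M N \<Otimes>\<^sub>M borel) (\<lambda>\<omega>. (T \<omega>, X \<omega>, Y1 \<omega>))"
    and Yc_meas: "\<forall>i<n. Yc i \<in> borel_measurable M"
    and consistency: "\<forall>i<n. \<forall>\<omega>\<in>space M. Tc i \<omega> = 1 \<longrightarrow> Yc i \<omega> = Y1c i \<omega>"
    and unconf: "cond_indep_given M N X T Y1"
    and Y1_sq_int: "integrable M (\<lambda>\<omega>. (Y1 \<omega>)\<^sup>2)"
    and c_pos: "c > 0" and \<delta>_pos: "0 < \<delta>" and \<delta>_lt1: "\<delta> < 1"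
    and cond_mom: "AE \<omega> in M. real_cond_exp M (sigmaX M N X) (\<lambda>w. (Y1 w)\<^sup>2) \<omega> \<le> c"
    and overlap: "AE \<omega> in M. pistar M N X T \<omega> \<ge> \<delta>"
  shows "(\<integral>\<^sup>+ \<omega>. ennreal ((ipw_est p f \<gamma> n Tc Xc Yc \<omega> - prob_space.expectation M Y1)\<^sup>2) \<partial>M)
           \<le> ennreal c * msre M N X T p f \<gamma>
             + ennreal (2 / (real n * \<delta>)) * ennreal c * (1 + msre M N X T p f \<gamma>)"
proof -
  have "P3 M N T Y1 X Tc Y1c Yc Xc n p f c \<delta>"
    unfolding P3_def using prob n_pos f_meas T_meas X_meas Y1_meas T_bin Tc_bin iid_indep iid_dist
      Yc_meas consistency unconf Y1_sq_int c_pos \<delta>_pos \<delta>_lt1 cond_mom overlap by blast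
  then show ?thesis by (rule P3.main)
qed

end
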